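(* Let $N\ge 1$ and let $-\infty<a_i\le b_i<\infty$ for $i=1,\dots,N$, with $r_i=(b_i-a_i)/2>0$ for all $i$. Let $\Theta=\prod_{i=1}^N[a_i,b_i]$ and $T(y)=\sum_{i=1}^N y_i$. Let $p$ be a sampling design on subsets of $\{1,\dots,N\}$ with inclusion probabilities $\pi_i=\mathbb P_p(i\in S)>0$ for all $i$. Then for any unbiased estimator $\delta$, \[ \sup_{y\in\Theta}R(\delta,p;y)\;\ge\;\sum_{i=1}^N r_i^2\,\frac{1-\pi_i}{\pi_i}. \]
   Context: A sampling design is a probability distribution $p$ on the subsets $s\subseteq\{1,\dots,N\}$; $S$ denotes the random sample drawn from $p$, $\mathbb P_p$ and $\mathbb E_p$ denote probability and expectation with respect to $p$. An estimator $\delta$ is a collection of measurable functions $\delta_s:\Theta_s\to\mathbb R$, one for each subset $s$, where $\Theta_s=\prod_{i\in s}[a_i,b_i]$ is the projection of $\Theta$ onto the coordinates in $s$; for $y\in\Theta$ write $y_s=(y_i)_{i\in s}$. The estimator is unbiased (for design $p$) if $\mathbb E_p[\delta_S(y_S)]=T(y)$ for all $y\in\Theta$. The risk is $R(\delta,p;y)=\mathbb E_p[(\delta_S(y_S)-T(y))^2]$. *)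

theory Defs
  imports "HOL-Probability.Probability"
begin

text \<open>An estimator is a family delta s of functions of the sampled values y_s;
  y_s is represented as the restriction of y to s (an extensional function on s).\<close>

definition Theta :: "nat \<Rightarrow> (nat \<Rightarrow> real) \<Rightarrow> (nat \<Rightarrow> real) \<Rightarrow> (nat \<Rightarrow> real) set" where
  "Theta N a b = PiE {1..N} (\<lambda>i. {a i..b i})"

definition total :: "nat \<Rightarrow> (nat \<Rightarrow> real) \<Rightarrow> real" where
  "total N y = (\<Sum>i=1..N. y i)"

definition sampling_design :: "nat \<Rightarrow> nat set pmf \<Rightarrow> bool" where
  "sampling_design N p \<longleftrightarrow> set_pmf p \<subseteq> Pow {1..N}"

definition incl_prob :: "nat set pmf \<Rightarrow> nat \<Rightarrow> real" where
  "incl_prob p i = measure_pmf.prob p {s. i \<in> s}"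

definition estimator :: "nat \<Rightarrow> (nat \<Rightarrow> real) \<Rightarrow> (nat \<Rightarrow> real)
    \<Rightarrow> (nat set \<Rightarrow> (nat \<Rightarrow> real) \<Rightarrow> real) \<Rightarrow> bool" where
  "estimator N a b \<delta> \<longleftrightarrow>
     (\<forall>s\<subseteq>{1..N}. \<delta> s \<in> borel_measurable (PiM s (\<lambda>i. restrict_space borel {a i..b i})))"

definition estimate :: "(nat set \<Rightarrow> (nat \<Rightarrow> real) \<Rightarrow> real) \<Rightarrow> nat set \<Rightarrow> (nat \<Rightarrow> real) \<Rightarrow> real" where
  "estimate \<delta> s y = \<delta> s (restrict y s)"

definition unbiased :: "nat \<Rightarrow> (nat \<Rightarrow> real) \<Rightarrow> (nat \<Rightarrow> real) \<Rightarrow> nat set pmf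
    \<Rightarrow> (nat set \<Rightarrow> (nat \<Rightarrow> real) \<Rightarrow> real) \<Rightarrow> bool" where
  "unbiased N a b p \<delta> \<longleftrightarrow>
     (\<forall>y\<in>Theta N a b. measure_pmf.expectation p (\<lambda>s. estimate \<delta> s y) = total N y)"

definition risk :: "nat \<Rightarrow> (nat set \<Rightarrow> (nat \<Rightarrow> real) \<Rightarrow> real) \<Rightarrow> nat set pmf \<Rightarrow> (nat \<Rightarrow> real) \<Rightarrow> real" where
  "risk N \<delta> p y = measure_pmf.expectation p (\<lambda>s. (estimate \<delta> s y - total N y)\<^sup>2)"

end

theory Submission imports Defs begin

definition flipi :: "nat \<Rightarrow> nat set \<Rightarrow> nat set" where
  "flipi i U = (if i \<in> U then U - {i} else insert i U)"

lemma flip_sum_zero: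
  fixes f :: "nat set \<Rightarrow> real"
  assumes "i \<in> I" "\<And>U. U \<in> Pow I \<Longrightarrow> f (flipi i U) = - f U"
  shows "(\<Sum>U\<in>Pow I. f U) = 0"
proof -
  have bij: "bij_betw (flipi i) (Pow I) (Pow I)"
    by (rule bij_betwI[where g="flipi i"]) (use assms(1) in \<open>auto simp: flipi_def split: if_splits\<close>)
  have "(\<Sum>U\<in>Pow I. f U) = (\<Sum>U\<in>Pow I. f (flipi i U))"
    using sum.reindex_bij_betw[OF bij, of f] by simp
  also have "\<dots> = (\<Sum>U\<in>Pow I. - f U)" using assms(2) by (rule sum.cong[OF refl])
  also have "\<dots> = - (\<Sum>U\<in>Pow I. f U)" by (simp add: sum_negf)
  finally show ?thesis by simp
qed

lemma bessel:
  fixes X :: "'u \<Rightarrow> real" and e :: "nat \<Rightarrow> 'u \<Rightarrow> real"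
  assumes "finite Us" "finite I" "M > 0"
    and orth: "\<And>i j. i\<in>I \<Longrightarrow> j\<in>I \<Longrightarrow> (\<Sum>U\<in>Us. e i U * e j U) = (if i = j then M else 0)"
  shows "(\<Sum>i\<in>I. ((\<Sum>U\<in>Us. X U * e i U)/M)\<^sup>2) \<le> (\<Sum>U\<in>Us. (X U)\<^sup>2)/M"
proof -
  define c where "c i = (\<Sum>U\<in>Us. X U * e i U)/M" for i
  have cM: "(\<Sum>U\<in>Us. X U * e i U) = M * c i" for i using assms(3) by (simp add: c_def)
  have "0 \<le> (\<Sum>U\<in>Us. (X U - (\<Sum>i\<in>I. c i * e i U))\<^sup>2)" by (rule sum_nonneg) simp
  also have "\<dots> = (\<Sum>U\<in>Us. (X U)\<^sup>2) - 2 * (\<Sum>U\<in>Us. X U * (\<Sum>i\<in>I. c i * e i U))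
       + (\<Sum>U\<in>Us. (\<Sum>i\<in>I. c i * e i U) * (\<Sum>j\<in>I. c j * e j U))"
    by (simp add: power2_eq_square algebra_simps sum.distrib sum_subtractf sum_distrib_left)
  also have "(\<Sum>U\<in>Us. X U * (\<Sum>i\<in>I. c i * e i U)) = (\<Sum>i\<in>I. c i * (\<Sum>U\<in>Us. X U * e i U))"
    by (simp add: sum_distrib_left sum_distrib_right sum.swap[of _ Us] algebra_simps)
  also have "\<dots> = M * (\<Sum>i\<in>I. (c i)\<^sup>2)"
    by (simp add: cM sum_distrib_left power2_eq_square algebra_simps)
  also have "(\<Sum>U\<in>Us. (\<Sum>i\<in>I. c i * e i U) * (\<Sum>j\<in>I. c j * e j U))
      = (\<Sum>i\<in>I. \<Sum>j\<in>I. c i * c j * (\<Sum>U\<in>Us. e i U * e j U))"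
    by (simp add: sum_distrib_left sum_distrib_right sum.swap[of _ Us] algebra_simps)
  also have "\<dots> = (\<Sum>i\<in>I. \<Sum>j\<in>I. c i * c j * (if i = j then M else 0))"
    by (intro sum.cong refl) (simp add: orth)
  also have "\<dots> = M * (\<Sum>i\<in>I. (c i)\<^sup>2)"
    using assms(2) by (simp add: sum_distrib_left power2_eq_square algebra_simps if_distrib sum.delta cong: if_cong)
  finally have "M * (\<Sum>i\<in>I. (c i)\<^sup>2) \<le> (\<Sum>U\<in>Us. (X U)\<^sup>2)" by simp
  then show ?thesis using assms(3) by (simp add: c_def[symmetric] field_simps)
qed

lemma wcs:
  fixes w x :: "'s \<Rightarrow> real"
  assumes "finite A" "\<And>s. s \<in> A \<Longrightarrow> w s \<ge> 0" "(\<Sum>s\<in>A. w s) > 0"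
  shows "(\<Sum>s\<in>A. w s * x s)\<^sup>2 / (\<Sum>s\<in>A. w s) \<le> (\<Sum>s\<in>A. w s * (x s)\<^sup>2)"
proof -
  define P where "P = (\<Sum>s\<in>A. w s)"
  define m where "m = (\<Sum>s\<in>A. w s * x s) / P"
  have "0 \<le> (\<Sum>s\<in>A. w s * (x s - m)\<^sup>2)" using assms(2) by (intro sum_nonneg) simp
  also have "\<dots> = (\<Sum>s\<in>A. w s * (x s)\<^sup>2) - 2 * m * (\<Sum>s\<in>A. w s * x s) + m\<^sup>2 * P"
    by (simp add: P_def power2_eq_square algebra_simps sum.distrib sum_subtractf sum_distrib_left)
  also have "\<dots> = (\<Sum>s\<in>A. w s * (x s)\<^sup>2) - (\<Sum>s\<in>A. w s * x s)\<^sup>2 / P"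
    using assms(3) by (simp add: m_def P_def[symmetric] power2_eq_square field_simps)
  finally show ?thesis by (simp add: P_def)
qed

theorem theorem1:
  fixes N :: nat and a b :: "nat \<Rightarrow> real" and p :: "nat set pmf"
    and \<delta> :: "nat set \<Rightarrow> (nat \<Rightarrow> real) \<Rightarrow> real"
  assumes "N \<ge> 1"
    and "\<forall>i\<in>{1..N}. (b i - a i) / 2 > 0"
    and "sampling_design N p"
    and "\<forall>i\<in>{1..N}. incl_prob p i > 0"
    and "estimator N a b \<delta>"
    and "unbiased N a b p \<delta>"
  shows "(SUP y\<in>Theta N a b. ereal (risk N \<delta> p y))
           \<ge> ereal (\<Sum>i=1..N. ((b i - a i) / 2)\<^sup>2 * (1 - incl_prob p i) / incl_prob p i)"
proof -
  define I where "I = {1..N}"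
  define S where "S = Pow I"
  define w where "w = pmf p"
  define r where "r i = (b i - a i)/2" for i
  define c where "c i = (a i + b i)/2" for i
  define vert where "vert U = restrict (\<lambda>i. if i\<in>U then b i else a i) I" for U
  define e where "e i (U::nat set) = (if i\<in>U then 1 else -1::real)" for i :: nat and U
  define M where "M = real (card S)"
  define d where "d s U = estimate \<delta> s (vert U)" for s U
  define T where "T U = total N (vert U)" for U
  define g where "g s i = (\<Sum>U\<in>S. d s U * e i U)/M" for s i
  define \<pi> where "\<pi> i = incl_prob p i" for i
  have finI: "finite I" and finS: "finite S" using I_def S_def by auto
  have Mpos: "M > 0" using finS by (auto simp: M_def S_def card_gt_0_iff)
  have supp: "set_pmf p \<subseteq> S" using assms(3) by (simp add: sampling_design_def S_def I_def)
  have w_nn: "w s \<ge> 0" for s by (simp add: w_def)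
  have sum_w: "(\<Sum>s\<in>S. w s) = 1" unfolding w_def using sum_pmf_eq_1[OF finS supp] .
  have rpos: "i \<in> I \<Longrightarrow> r i > 0" for i using assms(2) by (simp add: I_def r_def)
  have vert_in: "vert U \<in> Theta N a b" for U
    unfolding Theta_def vert_def I_def using rpos by (auto simp: I_def r_def less_imp_le)
  have T_eq: "T U = (\<Sum>j\<in>I. c j + r j * e j U)" for U
    unfolding T_def total_def I_def[symmetric]
    by (intro sum.cong refl) (simp add: vert_def e_def c_def r_def field_simps)
  have risk_eq: "risk N \<delta> p (vert U) = (\<Sum>s\<in>S. w s * (d s U - T U)\<^sup>2)" for U
    unfolding risk_def w_def d_def T_def
    by (subst integral_measure_pmf_real[OF finS]) (use supp in \<open>auto simp: mult.commute\<close>)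
  have unb: "(\<Sum>s\<in>S. w s * d s U) = T U" for U
  proof -
    have "measure_pmf.expectation p (\<lambda>s. estimate \<delta> s (vert U)) = total N (vert U)"
      using assms(6) vert_in unfolding unbiased_def by blast
    moreover have "measure_pmf.expectation p (\<lambda>s. estimate \<delta> s (vert U)) = (\<Sum>s\<in>S. w s * d s U)"
      unfolding w_def d_def
      by (subst integral_measure_pmf_real[OF finS]) (use supp in \<open>auto simp: mult.commute\<close>)
    ultimately show ?thesis by (simp add: T_def)
  qed
  have pi_eq: "\<pi> i = (\<Sum>s\<in>{s\<in>S. i \<in> s}. w s)" for i
  proof -
    have "\<pi> i = measure_pmf.expectation p (indicator {s. i \<in> s})"
      by (simp add: \<pi>_def incl_prob_def)
    also have "\<dots> = (\<Sum>s\<in>S. indicator {s. i \<in> s} s * w s)"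
      unfolding w_def by (subst integral_measure_pmf_real[OF finS]) (use supp in auto)
    also have "\<dots> = (\<Sum>s\<in>{s\<in>S. i \<in> s}. w s)"
      using finS by (simp add: sum.inter_filter[symmetric] indicator_def if_distrib Int_def cong: if_cong)
    finally show ?thesis .
  qed
  have e_flip: "i \<in> I \<Longrightarrow> e i (flipi i U) = - e i U" for i U
    by (simp add: e_def flipi_def)
  have e_flip2: "j \<noteq> i \<Longrightarrow> e j (flipi i U) = e j U" for i j U
    by (simp add: e_def flipi_def)
  have orth: "i \<in> I \<Longrightarrow> j \<in> I \<Longrightarrow> (\<Sum>U\<in>S. e i U * e j U) = (if i = j then M else 0)" for i j
  proof (cases "i = j")
    case True then show ?thesis proof - have "\<And>U. e i U * e j U = 1" using True by (simp add: e_def) then show ?thesis using True by (simp add: M_def) qed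
  next
    case False
    assume "i \<in> I" "j \<in> I"
    have "(\<Sum>U\<in>Pow I. e i U * e j U) = 0"
      by (rule flip_sum_zero[of i]) (use \<open>i \<in> I\<close> False in \<open>auto simp: e_flip e_flip2\<close>)
    then show ?thesis using False unfolding S_def by simp
  qed
  have sum_e: "i \<in> I \<Longrightarrow> (\<Sum>U\<in>S. e i U) = 0" for i
    unfolding S_def by (intro flip_sum_zero[of i]) (auto simp: e_flip)
  have T_e: "i \<in> I \<Longrightarrow> (\<Sum>U\<in>S. T U * e i U) = M * r i" for i
  proof -
    assume i: "i \<in> I"
    have "(\<Sum>U\<in>S. T U * e i U) = (\<Sum>j\<in>I. c j * (\<Sum>U\<in>S. e i U) + r j * (\<Sum>U\<in>S. e j U * e i U))"
    proof -
      have "(\<Sum>U\<in>S. T U * e i U) = (\<Sum>U\<in>S. \<Sum>j\<in>I. c j * e i U + r j * (e j U * e i U))"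
        unfolding T_eq by (simp add: sum_distrib_left sum_distrib_right sum.distrib algebra_simps)
      also have "\<dots> = (\<Sum>j\<in>I. \<Sum>U\<in>S. c j * e i U + r j * (e j U * e i U))"
        by (rule sum.swap)
      also have "\<dots> = (\<Sum>j\<in>I. c j * (\<Sum>U\<in>S. e i U) + r j * (\<Sum>U\<in>S. e j U * e i U))"
        by (simp add: sum.distrib sum_distrib_left)
      finally show ?thesis .
    qed
    also have "\<dots> = (\<Sum>j\<in>I. r j * (if j = i then M else 0))"
      using i by (intro sum.cong refl) (simp add: sum_e orth)
    also have "\<dots> = M * r i" using i finI by (simp add: if_distrib sum.delta cong: if_cong)
    finally show ?thesis .
  qed
  have g_zero: "i \<in> I \<Longrightarrow> i \<notin> s \<Longrightarrow> g s i = 0" for s i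
  proof -
    assume i: "i \<in> I" "i \<notin> s"
    have "d s (flipi i U) = d s U" for U
    proof -
      have "restrict (vert (flipi i U)) s = restrict (vert U) s"
        using i by (auto simp: vert_def flipi_def restrict_def)
      then show ?thesis by (simp add: d_def estimate_def)
    qed
    then have "(\<Sum>U\<in>S. d s U * e i U) = 0"
      unfolding S_def using i by (intro flip_sum_zero[of i]) (auto simp: e_flip)
    then show ?thesis by (simp add: g_def)
  qed
  have g_unb: "i \<in> I \<Longrightarrow> (\<Sum>s\<in>S. w s * g s i) = r i" for i
  proof -
    assume i: "i \<in> I"
    have "(\<Sum>s\<in>S. w s * g s i) = (\<Sum>U\<in>S. (\<Sum>s\<in>S. w s * d s U) * e i U) / M"
    proof -
      have "(\<Sum>s\<in>S. w s * g s i) = (\<Sum>s\<in>S. \<Sum>U\<in>S. w s * d s U * e i U) / M"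
        unfolding g_def by (simp add: sum_distrib_left sum_divide_distrib mult.assoc)
      also have "(\<Sum>s\<in>S. \<Sum>U\<in>S. w s * d s U * e i U) = (\<Sum>U\<in>S. \<Sum>s\<in>S. w s * d s U * e i U)"
        by (rule sum.swap)
      also have "\<dots> = (\<Sum>U\<in>S. (\<Sum>s\<in>S. w s * d s U) * e i U)"
        by (simp add: sum_distrib_right)
      finally show ?thesis .
    qed
    also have "\<dots> = r i" using Mpos by (simp add: unb T_e i)
    finally show ?thesis .
  qed
  have bes: "(\<Sum>i\<in>I. (g s i - r i)\<^sup>2) \<le> (\<Sum>U\<in>S. (d s U - T U)\<^sup>2)/M" for s
  proof -
    have "(\<Sum>U\<in>S. (d s U - T U) * e i U)/M = g s i - r i" if "i \<in> I" for i
      using T_e[OF that] Mpos by (simp add: g_def left_diff_distrib sum_subtractf diff_divide_distrib)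
    then have "(\<Sum>i\<in>I. (g s i - r i)\<^sup>2) = (\<Sum>i\<in>I. ((\<Sum>U\<in>S. (d s U - T U) * e i U)/M)\<^sup>2)"
      by simp
    also have "\<dots> \<le> (\<Sum>U\<in>S. (d s U - T U)\<^sup>2)/M"
      by (rule bessel[OF finS finI Mpos orth])
    finally show ?thesis .
  qed
  have per_i: "r i ^ 2 * (1 - \<pi> i) / \<pi> i \<le> (\<Sum>s\<in>S. w s * (g s i - r i)\<^sup>2)" if i: "i \<in> I" for i
  proof -
    define A where "A = {s\<in>S. i \<in> s}"
    define B where "B = {s\<in>S. i \<notin> s}"
    have AB: "A \<inter> B = {}" "A \<union> B = S" "finite A" "finite B" using finS by (auto simp: A_def B_def)
    have split: "(\<Sum>s\<in>S. f s) = (\<Sum>s\<in>A. f s) + (\<Sum>s\<in>B. f s)" for f :: "nat set \<Rightarrow> real"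
      using sum.union_disjoint[OF AB(3,4,1)] AB(2) by simp
    have piA: "\<pi> i = (\<Sum>s\<in>A. w s)" using pi_eq A_def by simp
    have pipos: "\<pi> i > 0" using assms(4) i by (simp add: \<pi>_def I_def)
    have wB: "(\<Sum>s\<in>B. w s) = 1 - \<pi> i" using split[of w] sum_w piA by simp
    have gB: "s \<in> B \<Longrightarrow> g s i = 0" for s using g_zero i by (simp add: B_def)
    have wgA: "(\<Sum>s\<in>A. w s * g s i) = r i" using split[of "\<lambda>s. w s * g s i"] g_unb[OF i] gB by simp
    have wxA: "(\<Sum>s\<in>A. w s * (g s i - r i)) = r i - \<pi> i * r i"
      using wgA piA by (simp add: right_diff_distrib sum_subtractf sum_distrib_right)
    have "(r i - \<pi> i * r i)\<^sup>2 / \<pi> i \<le> (\<Sum>s\<in>A. w s * (g s i - r i)\<^sup>2)"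
      using wcs[OF AB(3), of w "\<lambda>s. g s i - r i"] w_nn piA pipos wxA by simp
    moreover have "(\<Sum>s\<in>B. w s * (g s i - r i)\<^sup>2) = r i ^ 2 * (1 - \<pi> i)"
      using gB wB by (simp add: sum_distrib_right[symmetric] mult.commute)
    moreover have "r i ^ 2 * (1 - \<pi> i) / \<pi> i = (r i - \<pi> i * r i)\<^sup>2 / \<pi> i + r i ^ 2 * (1 - \<pi> i)"
      using pipos by (simp add: field_simps power2_eq_square)
    ultimately show ?thesis using split[of "\<lambda>s. w s * (g s i - r i)\<^sup>2"] by linarith
  qed
  have avg: "(\<Sum>i\<in>I. r i ^ 2 * (1 - \<pi> i) / \<pi> i) \<le> (\<Sum>U\<in>S. risk N \<delta> p (vert U)) / M"
  proof -
    have "(\<Sum>i\<in>I. r i ^ 2 * (1 - \<pi> i) / \<pi> i) \<le> (\<Sum>i\<in>I. \<Sum>s\<in>S. w s * (g s i - r i)\<^sup>2)"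
      by (intro sum_mono per_i)
    also have "\<dots> = (\<Sum>s\<in>S. w s * (\<Sum>i\<in>I. (g s i - r i)\<^sup>2))"
      by (subst sum.swap) (simp add: sum_distrib_left)
    also have "\<dots> \<le> (\<Sum>s\<in>S. w s * ((\<Sum>U\<in>S. (d s U - T U)\<^sup>2)/M))"
      by (intro sum_mono mult_left_mono bes w_nn)
    also have "\<dots> = (\<Sum>U\<in>S. risk N \<delta> p (vert U)) / M"
    proof -
      have "(\<Sum>s\<in>S. w s * ((\<Sum>U\<in>S. (d s U - T U)\<^sup>2)/M)) = (\<Sum>s\<in>S. \<Sum>U\<in>S. w s * (d s U - T U)\<^sup>2) / M"
        by (simp add: sum_distrib_left sum_divide_distrib)
      also have "(\<Sum>s\<in>S. \<Sum>U\<in>S. w s * (d s U - T U)\<^sup>2) = (\<Sum>U\<in>S. \<Sum>s\<in>S. w s * (d s U - T U)\<^sup>2)"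
        by (rule sum.swap)
      finally show ?thesis unfolding risk_eq .
    qed
    finally show ?thesis .
  qed
  obtain U0 where "(\<Sum>U\<in>S. risk N \<delta> p (vert U)) / M \<le> risk N \<delta> p (vert U0)"
  proof (rule ccontr)
    assume "\<not> thesis"
    then have lt: "\<And>U. risk N \<delta> p (vert U) < (\<Sum>U\<in>S. risk N \<delta> p (vert U)) / M"
      using that by (meson not_le)
    have "S \<noteq> {}" by (auto simp: S_def)
    then have "(\<Sum>U\<in>S. risk N \<delta> p (vert U)) < (\<Sum>U\<in>S. (\<Sum>U\<in>S. risk N \<delta> p (vert U)) / M)"
      using finS lt by (intro sum_strict_mono) auto
    also have "\<dots> = (\<Sum>U\<in>S. risk N \<delta> p (vert U))" using Mpos by (simp add: M_def)
    finally show False by simp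
  qed
  with avg have bnd: "(\<Sum>i\<in>I. r i ^ 2 * (1 - \<pi> i) / \<pi> i) \<le> risk N \<delta> p (vert U0)" by linarith
  have "ereal (risk N \<delta> p (vert U0)) \<le> (SUP y\<in>Theta N a b. ereal (risk N \<delta> p y))"
    by (rule SUP_upper[OF vert_in])
  with bnd show ?thesis unfolding I_def r_def \<pi>_def by (meson ereal_less_eq(3) order_trans)
qed

end
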